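(* Let $G=\langle A\cup B\rangle$ be a CS group with periodic rooted group $A$ such that either (i) $A$ has finite exponent, or (ii) the directed group $B$ has finite support. Let $S$ be a generating set of $B$. If the atomic dynamical system $\Sigma_S$ on $\mathcal P(A)$ is eventually trivial, then $G$ is periodic.
   Context: Let $X$ be a nonempty set (possibly infinite) with distinguished letter $0$, $\dot X=X\setminus\{0\}$. $X^*$ is the free monoid on $X$ viewed as a rooted tree; $\mathrm{Aut}(X^* )$ is the group of root-fixing tree automorphisms acting on the right ($gh$ = first $g$ then $h$); sections $g|_u$ are defined by $(u\star v).g=u.g\star v.(g|_u)$; elements of $\mathrm{Sym}(X)$ are identified with rooted automorphisms $(x\star v).\rho=x.\rho\star v$; $\mathrm{St}(1)$ is the first layer stabiliser. A constant spinal (CS) group is $G=\langle A\cup B\rangle$ with $A\le\mathrm{Sym}(X)$ transitive (rooted group) and $B\le\mathrm{St}(1)$ (directed group) such that $b|_0=b$ for all $b\in B$ and the elements $b|_x$ ($b\in B$, $x\in\dot X$) lie in $A$ and generate $A$. $B$ has finite support if each $b\in B$ has $b|_x=\mathrm{id}$ for all but finitely many $x$. A group is periodic if every element has finite order. Notation: $\mathrm{orb}_c(0)$ is the $\langle c\rangle$-orbit of $0$ and $\ell_c(0)$ its length. For $x\in X$ let $\mathrm{mp}_A(0,x)=\{c\in A:0.c=x\}$. For $a\in A$, $x\in X$: $\mathfrak C(a,x)=\{cac^{-1}:c\in\mathrm{mp}_A(0,x)\}$ and $\mathfrak X(a,x)=\bigcup_{c\in\mathfrak C(a,x)}\mathrm{orb}_c(0)\setminus\{0\}$.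 For $S\subseteq B$ put $H_S(a,x)=\langle b|_y: y\in\mathfrak X(a,x),\ b\in S\rangle\le A$ and define $\sigma_S(a,x)=\big\langle\, b|_{0.c}\,b|_{0.c^2}\cdots b|_{0.c^{\ell_c(0)-1}} : c\in\mathfrak C(a,x),\ b\in S\,\big\rangle\cdot H_S(a,x)'\subseteq A$, where $H_S(a,x)'$ is the derived subgroup (the set does not depend on the order of the factors in the products). $\Sigma_S:\mathcal P(A)\to\mathcal P(A)$ is the atomic map $\Sigma_S(P)=\bigcup_{a\in P}\bigcup_{x\in X}\sigma_S(a,x)$. It is eventually trivial if for every $a\in A$ there is $n$ with $\Sigma_S^m(\{a\})\subseteq\{1_A\}$ for all $m>n$. *)

theory Defs
  imports Main
begin

text \<open>The alphabet X is the whole type 'x (nonempty), with distinguished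
letter z. Automorphisms act on the right: u.g is written g u, so the
product gh (first g, then h) is the function h \<circ> g.\<close>

inductive_set gen :: "('a \<Rightarrow> 'a) set \<Rightarrow> ('a \<Rightarrow> 'a) set" for S where
  gen_id: "id \<in> gen S"
| gen_base: "s \<in> S \<Longrightarrow> s \<in> gen S"
| gen_mult: "g \<in> gen S \<Longrightarrow> h \<in> gen S \<Longrightarrow> h \<circ> g \<in> gen S"
| gen_inv: "g \<in> gen S \<Longrightarrow> inv g \<in> gen S"

definition is_subgroup :: "('a \<Rightarrow> 'a) set \<Rightarrow> bool" where
  "is_subgroup H \<longleftrightarrow> (\<forall>g\<in>H. bij g) \<and> id \<in> H \<and>
     (\<forall>g\<in>H. \<forall>h\<in>H. h \<circ> g \<in> H) \<and> (\<forall>g\<in>H. inv g \<in> H)"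

definition periodic :: "('a \<Rightarrow> 'a) set \<Rightarrow> bool" where
  "periodic H \<longleftrightarrow> (\<forall>g\<in>H. \<exists>n>0. g ^^ n = id)"

definition finite_exponent :: "('a \<Rightarrow> 'a) set \<Rightarrow> bool" where
  "finite_exponent H \<longleftrightarrow> (\<exists>n>0. \<forall>g\<in>H. g ^^ n = id)"

definition tree_aut :: "('x list \<Rightarrow> 'x list) \<Rightarrow> bool" where
  "tree_aut g \<longleftrightarrow> bij g \<and> (\<forall>u. length (g u) = length u) \<and>
     (\<forall>u v. take (length u) (g (u @ v)) = g u)"

text \<open>Section g|_u, defined by (u v).g = (u.g)(v.(g|_u)).\<close>
definition sect :: "('x list \<Rightarrow> 'x list) \<Rightarrow> 'x list \<Rightarrow> ('x list \<Rightarrow> 'x list)" where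
  "sect g u = (\<lambda>v. drop (length u) (g (u @ v)))"

definition rooted :: "('x \<Rightarrow> 'x) \<Rightarrow> ('x list \<Rightarrow> 'x list)" where
  "rooted \<rho> = (\<lambda>w. case w of [] \<Rightarrow> [] | x # v \<Rightarrow> \<rho> x # v)"

definition perm_of :: "('x list \<Rightarrow> 'x list) \<Rightarrow> ('x \<Rightarrow> 'x)" where
  "perm_of g = (\<lambda>x. hd (g [x]))"

text \<open>The element b|_y of the rooted group A (b|_y is a rooted automorphism).\<close>
definition lab :: "('x list \<Rightarrow> 'x list) \<Rightarrow> 'x \<Rightarrow> ('x \<Rightarrow> 'x)" where
  "lab b y = perm_of (sect b [y])"

definition St1 :: "('x list \<Rightarrow> 'x list) set" where
  "St1 = {g. tree_aut g \<and> (\<forall>x. g [x] = [x])}"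

definition CS_group :: "'x \<Rightarrow> ('x \<Rightarrow> 'x) set \<Rightarrow> ('x list \<Rightarrow> 'x list) set \<Rightarrow> bool" where
  "CS_group z A B \<longleftrightarrow>
     is_subgroup A \<and> (\<forall>x y. \<exists>a\<in>A. a x = y) \<and>
     is_subgroup B \<and> B \<subseteq> St1 \<and>
     (\<forall>b\<in>B. sect b [z] = b) \<and>
     (\<forall>b\<in>B. \<forall>x. x \<noteq> z \<longrightarrow> (\<exists>a\<in>A. sect b [x] = rooted a)) \<and>
     A = gen {a. \<exists>b\<in>B. \<exists>x. x \<noteq> z \<and> sect b [x] = rooted a}"

definition CS_gen :: "('x \<Rightarrow> 'x) set \<Rightarrow> ('x list \<Rightarrow> 'x list) set \<Rightarrow> ('x list \<Rightarrow> 'x list) set" where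
  "CS_gen A B = gen (rooted ` A \<union> B)"

definition finite_support :: "'x \<Rightarrow> ('x list \<Rightarrow> 'x list) set \<Rightarrow> bool" where
  "finite_support z B \<longleftrightarrow> (\<forall>b\<in>B. finite {x. sect b [x] \<noteq> id})"

definition orb :: "('x \<Rightarrow> 'x) \<Rightarrow> 'x \<Rightarrow> 'x set" where
  "orb c x = {(c ^^ n) x | n. True}"

definition orb_len :: "('x \<Rightarrow> 'x) \<Rightarrow> 'x \<Rightarrow> nat" where
  "orb_len c x = card (orb c x)"

text \<open>Product a1 a2 ... an in the right-action convention (a1 applied first).\<close>
fun rprod :: "('x \<Rightarrow> 'x) list \<Rightarrow> ('x \<Rightarrow> 'x)" where
  "rprod [] = id"
| "rprod (a # as) = rprod as \<circ> a"

definition mp :: "'x \<Rightarrow> ('x \<Rightarrow> 'x) set \<Rightarrow> 'x \<Rightarrow> ('x \<Rightarrow> 'x) set" where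
  "mp z A x = {c\<in>A. c z = x}"

text \<open>Conjugates c a c^{-1} (first c, then a, then c^{-1}).\<close>
definition CC :: "'x \<Rightarrow> ('x \<Rightarrow> 'x) set \<Rightarrow> ('x \<Rightarrow> 'x) \<Rightarrow> 'x \<Rightarrow> ('x \<Rightarrow> 'x) set" where
  "CC z A a x = {inv c \<circ> a \<circ> c | c. c \<in> mp z A x}"

definition XX :: "'x \<Rightarrow> ('x \<Rightarrow> 'x) set \<Rightarrow> ('x \<Rightarrow> 'x) \<Rightarrow> 'x \<Rightarrow> 'x set" where
  "XX z A a x = (\<Union>c\<in>CC z A a x. orb c z - {z})"

definition HS :: "'x \<Rightarrow> ('x \<Rightarrow> 'x) set \<Rightarrow> ('x list \<Rightarrow> 'x list) set \<Rightarrow> ('x \<Rightarrow> 'x) \<Rightarrow> 'x \<Rightarrow> ('x \<Rightarrow> 'x) set" where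
  "HS z A S a x = gen {lab b y | b y. y \<in> XX z A a x \<and> b \<in> S}"

text \<open>Derived subgroup, generated by commutators g^{-1} h^{-1} g h.\<close>
definition derived :: "('a \<Rightarrow> 'a) set \<Rightarrow> ('a \<Rightarrow> 'a) set" where
  "derived H = gen {h \<circ> g \<circ> inv h \<circ> inv g | g h. g \<in> H \<and> h \<in> H}"

text \<open>Product of subsets P Q = {pq} in the right-action convention.\<close>
definition setmul :: "('a \<Rightarrow> 'a) set \<Rightarrow> ('a \<Rightarrow> 'a) set \<Rightarrow> ('a \<Rightarrow> 'a) set" where
  "setmul P Q = {q \<circ> p | p q. p \<in> P \<and> q \<in> Q}"

definition sigma :: "'x \<Rightarrow> ('x \<Rightarrow> 'x) set \<Rightarrow> ('x list \<Rightarrow> 'x list) set \<Rightarrow> ('x \<Rightarrow> 'x) \<Rightarrow> 'x \<Rightarrow> ('x \<Rightarrow> 'x) set" where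
  "sigma z A S a x =
     setmul
       (gen {rprod (map (\<lambda>i. lab b ((c ^^ i) z)) [1..<orb_len c z]) | c b. c \<in> CC z A a x \<and> b \<in> S})
       (derived (HS z A S a x))"

definition Sigma_map :: "'x \<Rightarrow> ('x \<Rightarrow> 'x) set \<Rightarrow> ('x list \<Rightarrow> 'x list) set \<Rightarrow> ('x \<Rightarrow> 'x) set \<Rightarrow> ('x \<Rightarrow> 'x) set" where
  "Sigma_map z A S P = (\<Union>a\<in>P. \<Union>x. sigma z A S a x)"

definition eventually_trivial :: "'x \<Rightarrow> ('x \<Rightarrow> 'x) set \<Rightarrow> ('x list \<Rightarrow> 'x list) set \<Rightarrow> bool" where
  "eventually_trivial z A S \<longleftrightarrow>
     (\<forall>a\<in>A. \<exists>n. \<forall>m>n. (Sigma_map z A S ^^ m) {a} \<subseteq> {id})"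

end

theory Submission
  imports Defs "HOL-Library.Multiset"
begin

lemma gen_bij: assumes "\<And>s. s \<in> S \<Longrightarrow> bij s" shows "g \<in> gen S \<Longrightarrow> bij g"
proof (induction g rule: gen.induct)
  case gen_id then show ?case by (rule bij_id)
next
  case (gen_mult g h) then show ?case using bij_comp[of g h] by blast
qed (auto intro: bij_imp_bij_inv assms)


lemma gen_induct'[consumes 1, case_names id base mult inv]:
  assumes "x \<in> gen S" "P id" "\<And>s. s \<in> S \<Longrightarrow> P s"
    "\<And>g h. g \<in> gen S \<Longrightarrow> P g \<Longrightarrow> h \<in> gen S \<Longrightarrow> P h \<Longrightarrow> P (h \<circ> g)"
    "\<And>g. g \<in> gen S \<Longrightarrow> P g \<Longrightarrow> P (inv g)"
  shows "P x"
  using assms(1)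
proof (induction x rule: gen.induct)
  case gen_id show ?case using assms(2) .
next
  case (gen_base s) then show ?case using assms(3) by blast
next
  case (gen_mult g h) then show ?case using assms(4) by blast
next
  case (gen_inv g) then show ?case using assms(5) by blast
qed
lemma gen_id'[intro]: "(\<lambda>a. a) \<in> gen S" using gen.gen_id unfolding id_def .
lemma gen_mult'[intro]: "g \<in> gen S \<Longrightarrow> h \<in> gen S \<Longrightarrow> (\<lambda>a. h (g a)) \<in> gen S" using gen.gen_mult[of g S h] unfolding comp_def .

datatype 'a ltr = R "'a \<Rightarrow> 'a" | P "'a list \<Rightarrow> 'a list" | N "'a list \<Rightarrow> 'a list"

fun ev :: "'a ltr \<Rightarrow> 'a list \<Rightarrow> 'a list" where
  "ev (R a) = rooted a" | "ev (P s) = s" | "ev (N s) = inv s"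
fun evw :: "'a ltr list \<Rightarrow> 'a list \<Rightarrow> 'a list" where
  "evw [] = id" | "evw (l # w) = evw w \<circ> ev l"
fun pw :: "'a ltr list \<Rightarrow> 'a \<Rightarrow> 'a" where
  "pw [] = id" | "pw (R a # w) = pw w \<circ> a" | "pw (P s # w) = pw w" | "pw (N s # w) = pw w"
fun cnt :: "'a ltr list \<Rightarrow> nat" where
  "cnt [] = 0" | "cnt (R a # w) = cnt w" | "cnt (P s # w) = Suc (cnt w)" | "cnt (N s # w) = Suc (cnt w)"
fun secw :: "'a \<Rightarrow> 'a ltr list \<Rightarrow> 'a \<Rightarrow> 'a ltr list" where
  "secw z [] y = []"
| "secw z (R a # w) y = secw z w (a y)"
| "secw z (P s # w) y = (if y = z then [P s] else [R (lab s y)]) @ secw z w y"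
| "secw z (N s # w) y = (if y = z then [N s] else [R (inv (lab s y))]) @ secw z w y"
fun bl :: "('a\<Rightarrow>'a) \<Rightarrow> 'a ltr list \<Rightarrow> (('a\<Rightarrow>'a) \<times> bool \<times> ('a list \<Rightarrow> 'a list)) list" where
  "bl p [] = []" | "bl p (R a # w) = bl (a \<circ> p) w"
| "bl p (P s # w) = (p, True, s) # bl p w" | "bl p (N s # w) = (p, False, s) # bl p w"
fun isR :: "'a ltr \<Rightarrow> bool" where "isR (R a) = True" | "isR _ = False"
definition labe :: "bool \<Rightarrow> ('a list \<Rightarrow> 'a list) \<Rightarrow> 'a \<Rightarrow> ('a \<Rightarrow> 'a)" where
  "labe e s q = (if e then lab s q else inv (lab s q))"
definition valid :: "('a \<Rightarrow> 'a) set \<Rightarrow> ('a list \<Rightarrow> 'a list) set \<Rightarrow> 'a ltr list \<Rightarrow> bool" where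
  "valid A S w = (\<forall>l\<in>set w. case l of R a \<Rightarrow> a \<in> A | P s \<Rightarrow> s \<in> S | N s \<Rightarrow> s \<in> S)"
definition pwr :: "'a list \<Rightarrow> nat \<Rightarrow> 'a list" where "pwr w n = concat (replicate n w)"

lemma valid_simps[simp]: "valid A S [] = True" "valid A S (R a # w) = (a \<in> A \<and> valid A S w)"
  "valid A S (P s # w) = (s \<in> S \<and> valid A S w)" "valid A S (N s # w) = (s \<in> S \<and> valid A S w)"
  "valid A S (u @ v) = (valid A S u \<and> valid A S v)"
  by (auto simp: valid_def)

lemma evw_append[simp]: "evw (u @ v) = evw v \<circ> evw u"
  by (induction u) auto
lemma pw_append[simp]: "pw (u @ v) = pw v \<circ> pw u"
proof (induction u)
  case (Cons l u) then show ?case by (cases l) (auto simp: comp_assoc)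
qed simp
lemma cnt_append[simp]: "cnt (u @ v) = cnt u + cnt v"
  by (induction u rule: cnt.induct) auto
lemma secw_append[simp]: "secw z (u @ v) y = secw z u y @ secw z v (pw u y)"
  by (induction u arbitrary: y rule: pw.induct) auto
lemma valid_concat: "(\<And>u. u \<in> set us \<Longrightarrow> valid A S u) \<Longrightarrow> valid A S (concat us)"
  by (induction us) auto

lemma pwr_0[simp]: "pwr w 0 = []" by (simp add: pwr_def)
lemma pwr_Suc: "pwr w (Suc n) = w @ pwr w n" by (simp add: pwr_def)
lemma pwr_Suc2: "pwr w (Suc n) = pwr w n @ w"
  unfolding pwr_def by (induction n) auto
lemma valid_pwr: "valid A S w \<Longrightarrow> valid A S (pwr w n)"
  by (induction n) (auto simp: pwr_Suc)
lemma evw_pwr: "evw (pwr w n) = evw w ^^ n"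
  by (induction n) (auto simp: pwr_Suc funpow_Suc_right simp del: funpow.simps)
lemma pw_pwr: "pw (pwr w n) = pw w ^^ n"
  by (induction n) (auto simp: pwr_Suc funpow_Suc_right simp del: funpow.simps)
lemma cnt_pwr: "cnt (pwr w n) = n * cnt w"
  by (induction n) (auto simp: pwr_Suc)
lemma pwr_mult: "pwr w (m * n) = pwr (pwr w m) n"
  by (induction n) (auto simp: pwr_def replicate_add)
lemma secw_pwr_fix: "pw V y = y \<Longrightarrow> secw z (pwr V q) y = pwr (secw z V y) q"
  by (induction q) (auto simp: pwr_Suc)
lemma secw_pwr: "secw z (pwr w n) y = concat (map (\<lambda>i. secw z w ((pw w ^^ i) y)) [0..<n])"
  by (induction n) (auto simp: pwr_Suc2 pw_pwr)
lemma cnt_secw_le: "cnt (secw z w y) \<le> cnt w"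
  by (induction w arbitrary: y rule: cnt.induct) (auto simp: le_SucI)
lemma cnt_concat: "cnt (concat us) = sum_list (map cnt us)"
  by (induction us) auto
lemma pw_concat: "pw (concat us) = rprod (map pw us)"
  by (induction us) auto
lemma rprod_append[simp]: "rprod (xs @ ys) = rprod ys \<circ> rprod xs"
  by (induction xs) auto
lemma rprod_concat: "rprod (concat xss) = rprod (map rprod xss)"
  by (induction xss) auto

lemma rooted_Nil[simp]: "rooted a [] = []" and rooted_Cons[simp]: "rooted a (x # v) = a x # v"
  by (auto simp: rooted_def)
lemma perm_of_rooted[simp]: "perm_of (rooted a) = a"
  by (auto simp: perm_of_def)
lemma rooted_comp: "rooted b \<circ> rooted a = rooted (b \<circ> a)"
  by (rule ext, simp add: rooted_def split: list.splits)
lemma rooted_id[simp]: "rooted id = id"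
  by (rule ext, simp add: rooted_def split: list.splits)
lemma rooted_pow: "rooted a ^^ n = rooted (a ^^ n)"
proof (induction n)
  case 0 show ?case by (simp only: funpow.simps rooted_id)
next
  case (Suc n) then show ?case by (simp only: funpow.simps rooted_comp)
qed
lemma rooted_inv: assumes "bij a" shows "inv (rooted a) = rooted (inv a)"
proof (rule inv_unique_comp)
  show "rooted a \<circ> rooted (inv a) = id" using assms
    using surj_iff bij_is_surj by (metis rooted_comp rooted_id)
  show "rooted (inv a) \<circ> rooted a = id" using assms
    using inv_o_cancel bij_is_inj by (metis rooted_comp rooted_id)
qed

lemma rooted_bij: assumes "bij a" shows "bij (rooted a)"
proof (rule o_bij)
  show "rooted a \<circ> rooted (inv a) = id" using assms
    using surj_iff bij_is_surj by (metis rooted_comp rooted_id)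
  show "rooted (inv a) \<circ> rooted a = id" using assms
    using inv_o_cancel bij_is_inj by (metis rooted_comp rooted_id)
qed

fun invl :: "'a ltr \<Rightarrow> 'a ltr" where
  "invl (R a) = R (inv a)" | "invl (P s) = N s" | "invl (N s) = P s"
definition invw :: "'a ltr list \<Rightarrow> 'a ltr list" where "invw w = rev (map invl w)"

definition pn :: "'a ltr list \<Rightarrow> bool" where "pn w = (\<forall>l\<in>set w. \<not> isR l)"

locale csl =
  fixes z :: 'x and A :: "('x \<Rightarrow> 'x) set" and B S :: "('x list \<Rightarrow> 'x list) set"
  assumes CS: "CS_group z A B" and SB: "S \<subseteq> B" and BS: "B = gen S"
begin

lemma A_sg: "is_subgroup A" using CS unfolding CS_group_def by blast
lemma A_bij: "a \<in> A \<Longrightarrow> bij a" using A_sg by (simp add: is_subgroup_def)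
lemma A_comp: "a \<in> A \<Longrightarrow> b \<in> A \<Longrightarrow> b \<circ> a \<in> A" using A_sg by (simp add: is_subgroup_def)
lemma A_inv: "a \<in> A \<Longrightarrow> inv a \<in> A" using A_sg by (simp add: is_subgroup_def)
lemma A_id: "id \<in> A" using A_sg by (simp add: is_subgroup_def)
lemma A_pow: "a \<in> A \<Longrightarrow> a ^^ n \<in> A"
  by (induction n) (auto simp: A_id A_comp)
lemma A_trans: "\<exists>a\<in>A. a x = y" using CS unfolding CS_group_def by blast
lemma B_sg: "is_subgroup B" using CS unfolding CS_group_def by blast
lemma B_St1: "b \<in> B \<Longrightarrow> b \<in> St1" using CS unfolding CS_group_def by blast
lemma B_z: "b \<in> B \<Longrightarrow> sect b [z] = b" using CS unfolding CS_group_def by blast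
lemma B_nz: "b \<in> B \<Longrightarrow> x \<noteq> z \<Longrightarrow> \<exists>a\<in>A. sect b [x] = rooted a"
  using CS unfolding CS_group_def by blast
lemma B_bij: "b \<in> B \<Longrightarrow> bij b" using B_St1 by (auto simp: St1_def tree_aut_def)

lemma lab_nz: assumes "b \<in> B" "x \<noteq> z" shows "sect b [x] = rooted (lab b x)" "lab b x \<in> A"
  using B_nz[OF assms] by (auto simp: lab_def)

lemma B_Nil: "b \<in> B \<Longrightarrow> b [] = []"
proof -
  assume "b \<in> B"
  then have "length (b []) = 0" using B_St1 by (auto simp: St1_def tree_aut_def)
  then show "b [] = []" by simp
qed

lemma B_Cons: assumes "b \<in> B" shows "b (x # v) = x # sect b [x] v"
proof -
  have ta: "tree_aut b" and bx: "b [x] = [x]" using B_St1[OF assms] by (auto simp: St1_def)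
  have "take (length [x]) (b ([x] @ v)) = b [x]" using ta unfolding tree_aut_def by blast
  then have "take 1 (b (x # v)) = [x]" using bx by simp
  then have "b (x # v) = [x] @ drop 1 (b (x # v))" by (metis append_take_drop_id)
  then show ?thesis by (simp add: sect_def)
qed

lemma lab_z: "b \<in> B \<Longrightarrow> lab b z = id"
  by (rule ext) (simp add: lab_def B_z perm_of_def B_Cons)

lemma sect_bij: assumes "b \<in> B" shows "bij (sect b [x])"
proof (cases "x = z")
  case True then show ?thesis using assms B_z B_bij by simp
next
  case False then show ?thesis using lab_nz[OF assms] A_bij
    by (simp add: rooted_bij)
qed

end

context csl begin

lemma S_B: "s \<in> S \<Longrightarrow> s \<in> B" using SB by auto

lemma inv_B_Cons: assumes "b \<in> B" shows "inv b (x # v) = x # inv (sect b [x]) v"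
proof -
  have "b (x # inv (sect b [x]) v) = x # v"
    using B_Cons[OF assms] sect_bij[OF assms] by (simp add: bij_is_surj surj_f_inv_f)
  then show ?thesis using B_bij[OF assms] by (metis bij_is_inj inv_f_eq)
qed

lemma inv_B_Nil: assumes "b \<in> B" shows "inv b [] = []"
  using B_Nil[OF assms] B_bij[OF assms] by (metis bij_is_inj inv_f_eq)

lemma sect_P: assumes "s \<in> B" shows "evw (if y = z then [P s] else [R (lab s y)]) = sect s [y]"
  using B_z[OF assms] lab_nz[OF assms] by auto

lemma sect_N: assumes "s \<in> B" shows "evw (if y = z then [N s] else [R (inv (lab s y))]) = inv (sect s [y])"
proof (cases "y = z")
  case True then show ?thesis using B_z[OF assms] by simp
next
  case False then show ?thesis using lab_nz[OF assms False] A_bij rooted_inv[of "lab s y"] by simp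
qed

lemma UNF: "valid A S w \<Longrightarrow> evw w [] = [] \<and> (\<forall>y v. evw w (y # v) = pw w y # evw (secw z w y) v)"
proof (induction w)
  case Nil then show ?case by simp
next
  case (Cons l w)
  show ?case
  proof (cases l)
    case (R a) then show ?thesis using Cons by simp
  next
    case (P s)
    then have sB: "s \<in> B" using Cons S_B by simp
    have "evw (P s # w) (y # v) = pw (P s # w) y # evw (secw z (P s # w) y) v" for y v
      using Cons sect_P[OF sB, of y] by (simp add: B_Cons[OF sB] P)
    then show ?thesis using Cons P B_Nil[OF sB] by simp
  next
    case (N s)
    then have sB: "s \<in> B" using Cons S_B by simp
    have "evw (N s # w) (y # v) = pw (N s # w) y # evw (secw z (N s # w) y) v" for y v
      using Cons sect_N[OF sB, of y] by (simp add: inv_B_Cons[OF sB] N)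
    then show ?thesis using Cons N inv_B_Nil[OF sB] by simp
  qed
qed

lemma evw_Nil: "valid A S w \<Longrightarrow> evw w [] = []" using UNF by blast
lemma evw_Cons: "valid A S w \<Longrightarrow> evw w (y # v) = pw w y # evw (secw z w y) v" using UNF by blast

lemma POW: assumes "valid A S W" "pw W = id" "\<And>y. evw (secw z W y) ^^ n = id"
  shows "evw W ^^ n = id"
proof (rule ext)
  fix u show "(evw W ^^ n) u = id u"
  proof (cases u)
    case Nil then show ?thesis using evw_Nil[OF valid_pwr[OF assms(1)]] by (simp add: evw_pwr[symmetric])
  next
    case (Cons y v)
    have "(evw W ^^ n) u = evw (pwr W n) (y # v)" by (simp add: evw_pwr Cons)
    also have "\<dots> = y # evw (pwr (secw z W y) n) v"
      using evw_Cons[OF valid_pwr[OF assms(1)]] assms(2) by (simp add: pw_pwr secw_pwr_fix)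
    also have "\<dots> = u" using assms(3) by (simp add: evw_pwr Cons)
    finally show ?thesis by simp
  qed
qed

end

definition finord :: "('a \<Rightarrow> 'a) \<Rightarrow> bool" where "finord f = (\<exists>K>0. f ^^ K = id)"

lemma funpow_id_pow: "(id :: 'a \<Rightarrow> 'a) ^^ n = id"
  by (induction n) auto

lemma pow_dvd_id: assumes "f ^^ M = id" "M dvd K" shows "f ^^ K = id"
proof -
  obtain k where "K = M * k" using assms(2) by blast
  then show ?thesis using assms(1) by (simp add: funpow_mult[symmetric] funpow_id_pow)
qed

lemma finord_pow: "finord f \<Longrightarrow> finord (f ^^ q)"
  unfolding finord_def
proof -
  assume "\<exists>K>0. f ^^ K = id"
  then obtain K where K: "K > 0" "f ^^ K = id" by blast
  have "(f ^^ q) ^^ K = id" using K by (metis funpow_mult mult.commute funpow_id_pow)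
  then show "\<exists>K>0. (f ^^ q) ^^ K = id" using K by blast
qed

lemma UB: assumes "\<And>y. finord (u y)" "finite F" "E > 0" "\<And>y. y \<notin> F \<Longrightarrow> u y ^^ E = id"
  shows "\<exists>K>0. \<forall>y. u y ^^ K = id"
proof -
  define M where "M y = (SOME M. M > 0 \<and> u y ^^ M = id)" for y
  have M: "M y > 0 \<and> u y ^^ M y = id" for y
    using assms(1)[of y] unfolding finord_def M_def by (metis (mono_tags, lifting) someI_ex)
  define K where "K = E * prod M F"
  have "K > 0" unfolding K_def using M assms(3) by (simp add: prod_pos)
  moreover have "u y ^^ K = id" for y
  proof (cases "y \<in> F")
    case True
    then have "M y dvd K" unfolding K_def using assms(2) by (simp add: dvd_prodI)
    then show ?thesis using M pow_dvd_id by blast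
  next
    case False
    then show ?thesis using assms(4) pow_dvd_id[where f="u y" and M=E and K=K] by (simp add: K_def)
  qed
  ultimately show ?thesis by blast
qed

fun trivs :: "'a ltr list \<Rightarrow> 'a \<Rightarrow> bool" where
  "trivs [] y = True" | "trivs (R a # w) y = trivs w (a y)"
| "trivs (P s # w) y = (sect s [y] = id \<and> trivs w y)"
| "trivs (N s # w) y = (sect s [y] = id \<and> trivs w y)"

context csl begin

lemma ev_invl: assumes "valid A S [l]" shows "ev (invl l) \<circ> ev l = id" "ev l \<circ> ev (invl l) = id"
proof -
  have "ev (invl l) \<circ> ev l = id \<and> ev l \<circ> ev (invl l) = id"
  proof (cases l)
    case (R a)
    then have "bij a" using assms A_bij by simp
    then have "inv a \<circ> a = id" "a \<circ> inv a = id" by (auto simp: bij_is_inj inv_o_cancel bij_is_surj surj_iff[symmetric])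
    then show ?thesis using R by (simp add: rooted_comp)
  next
    case (P s)
    then have "bij s" using assms B_bij S_B by simp
    then show ?thesis using P by (auto simp: bij_is_inj inv_o_cancel bij_is_surj surj_iff[symmetric])
  next
    case (N s)
    then have "bij s" using assms B_bij S_B by simp
    then show ?thesis using N by (auto simp: bij_is_inj inv_o_cancel bij_is_surj surj_iff[symmetric])
  qed
  then show "ev (invl l) \<circ> ev l = id" "ev l \<circ> ev (invl l) = id" by auto
qed

lemma evw_invw: "valid A S w \<Longrightarrow> evw (invw w) \<circ> evw w = id \<and> evw w \<circ> evw (invw w) = id"
proof (induction w)
  case Nil then show ?case by (simp add: invw_def)
next
  case (Cons l w)
  have vl: "valid A S [l]" and vw: "valid A S w" using Cons.prems by (auto simp: valid_def)
  have e: "evw (invw (l # w)) = ev (invl l) \<circ> evw (invw w)" by (simp add: invw_def)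
  have IH1: "evw (invw w) \<circ> evw w = id" using Cons.IH vw by blast
  have IH2: "evw w \<circ> evw (invw w) = id" using Cons.IH vw by blast
  have "(ev (invl l) \<circ> evw (invw w)) \<circ> (evw w \<circ> ev l) = ev (invl l) \<circ> (evw (invw w) \<circ> evw w) \<circ> ev l"
    by (simp add: comp_assoc)
  also have "\<dots> = id" by (simp only: IH1 ev_invl[OF vl] comp_id)
  finally have 1: "evw (invw (l # w)) \<circ> evw (l # w) = id" using e by simp
  have "(evw w \<circ> ev l) \<circ> (ev (invl l) \<circ> evw (invw w)) = evw w \<circ> (ev l \<circ> ev (invl l)) \<circ> evw (invw w)"
    by (simp add: comp_assoc)
  also have "\<dots> = id" by (simp only: IH2 ev_invl[OF vl] comp_id)
  finally have 2: "evw (l # w) \<circ> evw (invw (l # w)) = id" using e by simp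
  show ?case using 1 2 by blast
qed

lemma valid_invw: "valid A S w \<Longrightarrow> valid A S (invw w)"
proof (induction w)
  case (Cons l w) then show ?case by (cases l) (auto simp: invw_def A_inv)
qed (simp add: invw_def)

lemma pn_invw: "pn w \<Longrightarrow> pn (invw w)"
proof (induction w)
  case (Cons l w) then show ?case by (cases l) (auto simp: invw_def pn_def)
qed (simp add: invw_def pn_def)

lemma inv_evw: "valid A S w \<Longrightarrow> inv (evw w) = evw (invw w)"
  using evw_invw by (blast intro: inv_unique_comp)

lemma B_words: "b \<in> gen S \<Longrightarrow> \<exists>w. valid A S w \<and> pn w \<and> b = evw w"
proof (induction b rule: gen.induct)
  case gen_id then show ?case by (rule exI[of _ "[]"]) (simp add: pn_def)
next
  case (gen_base s) then show ?case by (intro exI[of _ "[P s]"]) (simp add: pn_def)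
next
  case (gen_mult g h)
  then obtain u v where "valid A S u" "pn u" "g = evw u" "valid A S v" "pn v" "h = evw v" by blast
  then show ?case by (intro exI[of _ "u @ v"]) (auto simp: pn_def)
next
  case (gen_inv g)
  then obtain u where "valid A S u" "pn u" "g = evw u" by blast
  then show ?case using inv_evw valid_invw pn_invw by blast
qed

lemma G_words: "g \<in> CS_gen A B \<Longrightarrow> \<exists>w. valid A S w \<and> g = evw w"
  unfolding CS_gen_def
proof (induction g rule: gen.induct)
  case gen_id then show ?case by (rule exI[of _ "[]"]) simp
next
  case (gen_base g)
  then show ?case
  proof
    assume "g \<in> rooted ` A"
    then obtain a where "a \<in> A" "g = rooted a" by blast
    then show ?case by (intro exI[of _ "[R a]"]) simp
  next
    assume "g \<in> B" then show ?case using B_words BS by blast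
  qed
next
  case (gen_mult g h)
  then obtain u v where "valid A S u" "g = evw u" "valid A S v" "h = evw v" by blast
  then show ?case by (intro exI[of _ "u @ v"]) auto
next
  case (gen_inv g)
  then obtain u where "valid A S u" "g = evw u" by blast
  then show ?case using inv_evw valid_invw by blast
qed

lemma allR_evw: "valid A S w \<Longrightarrow> \<forall>l\<in>set w. isR l \<Longrightarrow> evw w = rooted (pw w)"
proof (induction w)
  case (Cons l w) then show ?case by (cases l) (auto simp: rooted_comp, simp add: comp_def)
qed simp

lemma pw_A: "valid A S w \<Longrightarrow> pw w \<in> A"
proof (induction w)
  case (Cons l w)
  show ?case
  proof (cases l)
    case (R a)
    then have "a \<in> A" "pw w \<in> A" using Cons by auto
    then have "pw w \<circ> a \<in> A" by (rule A_comp)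
    then show ?thesis using R by (simp add: comp_def)
  qed (use Cons in auto)
qed (simp add: A_id)

lemma cnt0_allR: "cnt w = 0 \<Longrightarrow> \<forall>l\<in>set w. isR l"
proof (induction w)
  case (Cons l w) then show ?case by (cases l) auto
qed simp

lemma valid_secw: "valid A S w \<Longrightarrow> valid A S (secw z w y)"
proof (induction w arbitrary: y)
  case (Cons l w) then show ?case by (cases l) (auto simp: lab_nz S_B A_inv)
qed simp

lemma pn_pw: "pn w \<Longrightarrow> pw w = id"
proof (induction w)
  case (Cons l w) then show ?case by (cases l) (auto simp: pn_def)
qed simp

lemma pn_secw_z: "pn w \<Longrightarrow> secw z w z = w"
proof (induction w)
  case (Cons l w) then show ?case by (cases l) (auto simp: pn_def)
qed simp

lemma pn_secw_nz: "pn w \<Longrightarrow> y \<noteq> z \<Longrightarrow> \<forall>l\<in>set (secw z w y). isR l"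
proof (induction w)
  case (Cons l w) then show ?case by (cases l) (auto simp: pn_def)
qed simp

lemma finite_cnt: "valid A S w \<Longrightarrow> finite {y. cnt (secw z w y) \<noteq> 0}"
proof (induction w)
  case (Cons l w)
  show ?case
  proof (cases l)
    case (R a)
    then have "{y. cnt (secw z (l # w) y) \<noteq> 0} = a -` {y. cnt (secw z w y) \<noteq> 0}" by auto
    moreover have "finite (a -` {y. cnt (secw z w y) \<noteq> 0})"
      using Cons R A_bij by (intro finite_vimageI) (auto simp: bij_is_inj)
    ultimately show ?thesis by simp
  next
    case (P s)
    then have "{y. cnt (secw z (l # w) y) \<noteq> 0} \<subseteq> insert z {y. cnt (secw z w y) \<noteq> 0}" by auto
    then show ?thesis using Cons P by (simp add: finite_subset)
  next
    case (N s)
    then have "{y. cnt (secw z (l # w) y) \<noteq> 0} \<subseteq> insert z {y. cnt (secw z w y) \<noteq> 0}" by auto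
    then show ?thesis using Cons N by (simp add: finite_subset)
  qed
qed simp

lemma trivs_id: "valid A S w \<Longrightarrow> trivs w y \<Longrightarrow> evw (secw z w y) = id"
proof (induction w arbitrary: y)
  case (Cons l w)
  show ?case
  proof (cases l)
    case (R a) then show ?thesis using Cons by simp
  next
    case (P s) then show ?thesis using Cons sect_P[of s y] S_B by simp
  next
    case (N s) then show ?thesis using Cons sect_N[of s y] S_B by simp
  qed
qed simp

lemma finite_trivs: assumes FS: "finite_support z B" shows "valid A S w \<Longrightarrow> finite {y. \<not> trivs w y}"
proof (induction w)
  case (Cons l w)
  show ?case
  proof (cases l)
    case (R a)
    then have "{y. \<not> trivs (l # w) y} = a -` {y. \<not> trivs w y}" by auto
    moreover have "finite (a -` {y. \<not> trivs w y})"
      using Cons R A_bij by (intro finite_vimageI) (auto simp: bij_is_inj)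
    ultimately show ?thesis by simp
  next
    case (P s)
    then have "finite {y. sect s [y] \<noteq> id}" using FS Cons S_B by (simp add: finite_support_def)
    moreover have "{y. \<not> trivs (l # w) y} \<subseteq> {y. sect s [y] \<noteq> id} \<union> {y. \<not> trivs w y}" using P by auto
    ultimately show ?thesis using Cons P by (simp add: finite_subset)
  next
    case (N s)
    then have "finite {y. sect s [y] \<noteq> id}" using FS Cons S_B by (simp add: finite_support_def)
    moreover have "{y. \<not> trivs (l # w) y} \<subseteq> {y. sect s [y] \<noteq> id} \<union> {y. \<not> trivs w y}" using N by auto
    ultimately show ?thesis using Cons N by (simp add: finite_subset)
  qed
qed simp

lemma fin_bad: assumes FF: "finite_exponent A \<or> finite_support z B" and v: "valid A S w"
  shows "\<exists>E>0. \<exists>F. finite F \<and> (\<forall>y. y \<notin> F \<longrightarrow> evw (secw z w y) ^^ E = id)"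
  using FF
proof
  assume "finite_exponent A"
  then obtain E where E: "E > 0" "\<forall>g\<in>A. g ^^ E = id" by (auto simp: finite_exponent_def)
  have "evw (secw z w y) ^^ E = id" if "y \<notin> {y. cnt (secw z w y) \<noteq> 0}" for y
  proof -
    have vs: "valid A S (secw z w y)" using valid_secw[OF v] .
    have "cnt (secw z w y) = 0" using that by simp
    then have "evw (secw z w y) = rooted (pw (secw z w y))"
      using allR_evw[OF vs] cnt0_allR by blast
    then show ?thesis using E pw_A[OF vs] by (simp add: rooted_pow)
  qed
  then show ?thesis using E finite_cnt[OF v] by blast
next
  assume "finite_support z B"
  then have "finite {y. \<not> trivs w y}" using finite_trivs v by blast
  moreover have "\<forall>y. y \<notin> {y. \<not> trivs w y} \<longrightarrow> evw (secw z w y) ^^ 1 = id"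
    using trivs_id[OF v] by simp
  ultimately show ?thesis by (intro exI[of _ 1]) blast
qed

end

definition per :: "('a \<Rightarrow> 'a) \<Rightarrow> 'a \<Rightarrow> nat" where
  "per a y = (LEAST l. 0 < l \<and> (a ^^ l) y = y)"

lemma funpow_fix_mult: "(a ^^ p) y = y \<Longrightarrow> (a ^^ (p * q)) y = y"
proof (induction q)
  case (Suc q)
  have "(a ^^ (p * Suc q)) y = (a ^^ p) ((a ^^ (p * q)) y)" by (simp add: funpow_add)
  then show ?case using Suc by simp
qed simp

lemma funpow_mod: assumes "(a ^^ p) y = y" shows "(a ^^ n) y = (a ^^ (n mod p)) y"
proof -
  have "n = n mod p + p * (n div p)" by simp
  then have "(a ^^ n) y = (a ^^ (n mod p)) ((a ^^ (p * (n div p))) y)"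
    by (metis funpow_add o_apply)
  then show ?thesis using funpow_fix_mult[OF assms] by simp
qed

context
  fixes a :: "'a \<Rightarrow> 'a" and y :: 'a
  assumes ex: "\<exists>k>0. (a ^^ k) y = y"
begin
lemma per_pos: "0 < per a y" and per_fix: "(a ^^ per a y) y = y"
  using LeastI_ex[OF ex] unfolding per_def by auto
lemma per_min: "0 < j \<Longrightarrow> j < per a y \<Longrightarrow> (a ^^ j) y \<noteq> y"
  unfolding per_def using not_less_Least by blast
lemma per_dvd: assumes "(a ^^ k) y = y" shows "per a y dvd k"
proof -
  have "(a ^^ (k mod per a y)) y = y" using funpow_mod[OF per_fix, of k] assms by simp
  moreover have "k mod per a y < per a y" using per_pos by simp
  ultimately have "k mod per a y = 0" using per_min by (metis neq0_conv)
  then show ?thesis by auto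
qed
end

context csl begin

lemma A_per: assumes "periodic A" "a \<in> A" shows "\<exists>k>0. a ^^ k = id"
  using assms by (auto simp: periodic_def)

lemma B_finord: assumes PA: "periodic A" and FF: "finite_exponent A \<or> finite_support z B"
  and bB: "b \<in> B" shows "finord b"
proof -
  obtain w where v: "valid A S w" and p: "pn w" and bw: "b = evw w" using B_words bB BS by blast
  obtain E F where EF: "E > 0" "finite F" "\<And>y. y \<notin> F \<Longrightarrow> evw (secw z w y) ^^ E = id"
    using fin_bad[OF FF v] by blast
  define u where "u y = (if y = z then id else evw (secw z w y))" for y
  have fo: "finord (u y)" for y
  proof (cases "y = z")
    case True then show ?thesis by (auto simp: u_def finord_def intro: exI[of _ 1])
  next
    case False
    have vs: "valid A S (secw z w y)" using valid_secw[OF v] .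
    have e: "evw (secw z w y) = rooted (pw (secw z w y))" using allR_evw[OF vs] pn_secw_nz[OF p False] by blast
    obtain k where "k > 0" "pw (secw z w y) ^^ k = id" using A_per[OF PA pw_A[OF vs]] by blast
    then show ?thesis using False e by (auto simp: u_def finord_def rooted_pow)
  qed
  have "u y ^^ E = id" if "y \<notin> F" for y using EF that by (simp add: u_def funpow_id_pow)
  then obtain K where K: "K > 0" "\<And>y. u y ^^ K = id" using UB[of u F E] fo EF by blast
  have pwid: "pw w = id" using pn_pw[OF p] .
  have "(evw w ^^ K) v' = v'" for v'
  proof (induction v')
    case Nil then show ?case using evw_Nil[OF valid_pwr[OF v]] by (simp add: evw_pwr[symmetric])
  next
    case (Cons y v')
    have "(evw w ^^ K) (y # v') = evw (pwr w K) (y # v')" by (simp add: evw_pwr)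
    also have "\<dots> = y # evw (pwr (secw z w y) K) v'"
      using evw_Cons[OF valid_pwr[OF v]] pwid by (simp add: pw_pwr secw_pwr_fix funpow_id_pow)
    also have "\<dots> = y # v'"
    proof (cases "y = z")
      case True then show ?thesis using Cons pn_secw_z[OF p] by (simp add: evw_pwr)
    next
      case False then show ?thesis using K(2)[of y] by (simp add: evw_pwr u_def)
    qed
    finally show ?case .
  qed
  then have "evw w ^^ K = id" by auto
  then show ?thesis using K bw by (auto simp: finord_def)
qed

lemma CMB: assumes PA: "periodic A" and FF: "finite_exponent A \<or> finite_support z B"
  and v: "valid A S w" and hy: "\<And>y. finord (evw (secw z (pwr w (per (pw w) y)) y))"
  shows "finord (evw w)"
proof -
  define a where "a = pw w"
  obtain k where k: "k > 0" "a ^^ k = id" using A_per[OF PA pw_A[OF v]] a_def by blast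
  define W where "W = pwr w k"
  have vW: "valid A S W" using valid_pwr[OF v] W_def by simp
  have pW: "pw W = id" using k by (simp add: W_def pw_pwr a_def)
  obtain E F where EF: "E > 0" "finite F" "\<And>y. y \<notin> F \<Longrightarrow> evw (secw z W y) ^^ E = id"
    using fin_bad[OF FF vW] by blast
  have fo: "finord (evw (secw z W y))" for y
  proof -
    have ex: "\<exists>k>0. (a ^^ k) y = y" using k by auto
    define l where "l = per a y"
    have "l dvd k" using per_dvd[OF ex] k by (simp add: l_def)
    then obtain q where q: "k = l * q" by blast
    have fl: "pw (pwr w l) y = y" using per_fix[OF ex] by (simp add: pw_pwr l_def a_def)
    have "secw z W y = pwr (secw z (pwr w l) y) q"
      unfolding W_def q pwr_mult using secw_pwr_fix[OF fl] by simp
    then have "evw (secw z W y) = evw (secw z (pwr w l) y) ^^ q" by (simp add: evw_pwr)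
    then show ?thesis using finord_pow hy[of y] by (simp add: l_def a_def)
  qed
  obtain K where K: "K > 0" "\<And>y. evw (secw z W y) ^^ K = id"
    using UB[of "\<lambda>y. evw (secw z W y)" F E] fo EF by blast
  have "evw W ^^ K = id" using POW[OF vW pW] K by blast
  then have "evw w ^^ (k * K) = id" by (simp add: W_def evw_pwr funpow_mult)
  moreover have "k * K > 0" using k K by simp
  ultimately show ?thesis unfolding finord_def by blast
qed

end

lemma gen_least: assumes "S \<subseteq> M" "id \<in> M" "\<And>g h. g \<in> M \<Longrightarrow> h \<in> M \<Longrightarrow> h \<circ> g \<in> M"
  "\<And>g. g \<in> M \<Longrightarrow> inv g \<in> M" shows "gen S \<subseteq> M"
proof
  fix x assume "x \<in> gen S" then show "x \<in> M"
  proof (induction x rule: gen_induct')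
    case id show ?case by (rule assms(2))
  next
    case (base s) then show ?case using assms(1) by blast
  next
    case (mult g h) then show ?case using assms(3) by blast
  next
    case (inv g) then show ?case using assms(4) by blast
  qed
qed

lemma gen_sub: assumes "\<And>s. s \<in> T \<Longrightarrow> s \<in> gen X" shows "g \<in> gen T \<Longrightarrow> g \<in> gen X"
  by (induction g rule: gen_induct') (auto intro: gen.intros assms)

declare rprod.simps[simp del]
lemma rprod_Nil'[simp]: "rprod [] = id" by (rule ext) (simp add: rprod.simps)
lemma rprod_Cons'[simp]: "rprod (a # as) = rprod as \<circ> a" by (rule ext) (simp add: rprod.simps)

locale dsg =
  fixes X :: "('a \<Rightarrow> 'a) set"
  assumes Xbij: "\<And>x. x \<in> X \<Longrightarrow> bij x"
begin

abbreviation "H \<equiv> gen X"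
abbreviation "K \<equiv> derived (gen X)"

lemma H_bij: "h \<in> H \<Longrightarrow> bij h" using gen_bij Xbij by blast

lemma comm_H: "g \<in> H \<Longrightarrow> h \<in> H \<Longrightarrow> h \<circ> g \<circ> inv h \<circ> inv g \<in> H"
  by (rule gen.gen_mult[OF gen.gen_inv gen.gen_mult[OF gen.gen_inv gen.gen_mult]])

lemma K_H: "k \<in> K \<Longrightarrow> k \<in> H"
  unfolding derived_def by (rule gen_sub) (auto intro: gen.intros)

lemma comm_K: "g \<in> H \<Longrightarrow> h \<in> H \<Longrightarrow> h \<circ> g \<circ> inv h \<circ> inv g \<in> K"
  unfolding derived_def by (rule gen_base) blast

lemma conj_H: "Y \<in> H \<Longrightarrow> h \<in> H \<Longrightarrow> Y \<circ> h \<circ> inv Y \<in> H"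
  by (rule gen.gen_mult[OF gen.gen_inv gen.gen_mult])

lemma bij_inv_l: "bij Y \<Longrightarrow> inv Y (Y x) = x" by (simp add: bij_is_inj)
lemma bij_inv_r: "bij Y \<Longrightarrow> Y (inv Y x) = x" by (simp add: bij_is_surj surj_f_inv_f)

lemma inv_conj: assumes "bij Y" "bij h" shows "inv (Y \<circ> h \<circ> inv Y) = Y \<circ> inv h \<circ> inv Y"
proof (rule inv_unique_comp)
  show "Y \<circ> h \<circ> inv Y \<circ> (Y \<circ> inv h \<circ> inv Y) = id"
    using assms by (auto simp: fun_eq_iff bij_inv_l bij_inv_r)
  show "Y \<circ> inv h \<circ> inv Y \<circ> (Y \<circ> h \<circ> inv Y) = id"
    using assms by (auto simp: fun_eq_iff bij_inv_l bij_inv_r)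
qed

lemma K_normal: assumes Y: "Y \<in> H" and k: "k \<in> K" shows "Y \<circ> k \<circ> inv Y \<in> K"
proof -
  define C where "C = {h \<circ> g \<circ> inv h \<circ> inv g |g h. g \<in> H \<and> h \<in> H}"
  have KC: "K = gen C" unfolding C_def derived_def by simp
  have bY: "bij Y" using H_bij[OF Y] .
  have "gen C \<subseteq> {k. k \<in> H \<and> Y \<circ> k \<circ> inv Y \<in> gen C}"
  proof (rule gen_least)
    show "C \<subseteq> {k. k \<in> H \<and> Y \<circ> k \<circ> inv Y \<in> gen C}"
    proof
      fix c assume "c \<in> C"
      then obtain g h where c: "c = h \<circ> g \<circ> inv h \<circ> inv g" "g \<in> H" "h \<in> H" unfolding C_def by blast
      define g' where "g' = Y \<circ> g \<circ> inv Y"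
      define h' where "h' = Y \<circ> h \<circ> inv Y"
      have bg: "bij g" and bh: "bij h" using H_bij c by auto
      have "Y \<circ> c \<circ> inv Y = h' \<circ> g' \<circ> inv h' \<circ> inv g'"
        unfolding g'_def h'_def c inv_conj[OF bY bh] inv_conj[OF bY bg]
        using bY by (auto simp: fun_eq_iff bij_inv_l)
      moreover have "g' \<in> H" "h' \<in> H" using conj_H Y c g'_def h'_def by auto
      ultimately have "Y \<circ> c \<circ> inv Y \<in> C" unfolding C_def by blast
      moreover have "c \<in> H" using comm_H c by simp
      ultimately show "c \<in> {k. k \<in> H \<and> Y \<circ> k \<circ> inv Y \<in> gen C}" by (simp add: gen.gen_base)
    qed
  next
    have e: "Y \<circ> id \<circ> inv Y = id" using bY by (auto simp: fun_eq_iff bij_inv_r)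
    show "id \<in> {k. k \<in> H \<and> Y \<circ> k \<circ> inv Y \<in> gen C}" unfolding mem_Collect_eq e
      by (blast intro: gen.gen_id)
  next
    fix k1 k2 assume a: "k1 \<in> {k. k \<in> H \<and> Y \<circ> k \<circ> inv Y \<in> gen C}" "k2 \<in> {k. k \<in> H \<and> Y \<circ> k \<circ> inv Y \<in> gen C}"
    have e: "Y \<circ> (k2 \<circ> k1) \<circ> inv Y = (Y \<circ> k2 \<circ> inv Y) \<circ> (Y \<circ> k1 \<circ> inv Y)"
      using bY by (auto simp: fun_eq_iff bij_inv_l)
    show "k2 \<circ> k1 \<in> {k. k \<in> H \<and> Y \<circ> k \<circ> inv Y \<in> gen C}" unfolding mem_Collect_eq e
      using a by (blast intro: gen.gen_mult)
  next
    fix k assume a: "k \<in> {k. k \<in> H \<and> Y \<circ> k \<circ> inv Y \<in> gen C}"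
    have "bij k" using a H_bij by blast
    then have e: "Y \<circ> inv k \<circ> inv Y = inv (Y \<circ> k \<circ> inv Y)" using inv_conj[OF bY] by simp
    show "inv k \<in> {k. k \<in> H \<and> Y \<circ> k \<circ> inv Y \<in> gen C}" unfolding mem_Collect_eq e
      using a by (blast intro: gen.gen_inv)
  qed
  then show ?thesis using k KC by blast
qed


definition rel :: "('a \<Rightarrow> 'a) \<Rightarrow> ('a \<Rightarrow> 'a) \<Rightarrow> bool" where
  "rel u v = (\<exists>k\<in>K. u = k \<circ> v)"

lemma rel_refl: "rel u u"
  unfolding rel_def derived_def by (intro bexI[of _ id]) (auto intro: gen.gen_id)

lemma rel_trans: "rel u v \<Longrightarrow> rel v w \<Longrightarrow> rel u w"
proof -
  assume "rel u v" "rel v w"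
  then obtain k1 k2 where "k1 \<in> K" "u = k1 \<circ> v" "k2 \<in> K" "v = k2 \<circ> w" unfolding rel_def by blast
  moreover have "k1 \<circ> k2 \<in> K" using calculation unfolding derived_def by (simp add: gen.gen_mult)
  ultimately show "rel u w" unfolding rel_def by (metis comp_assoc)
qed

lemma rel_cong: assumes "V \<in> H" "rel u v" "rel U V" shows "rel (U \<circ> u) (V \<circ> v)"
proof -
  obtain k1 k2 where k: "k1 \<in> K" "U = k1 \<circ> V" "k2 \<in> K" "u = k2 \<circ> v" using assms unfolding rel_def by blast
  have "U \<circ> u = (k1 \<circ> (V \<circ> k2 \<circ> inv V)) \<circ> (V \<circ> v)"
    using k H_bij[OF assms(1)] by (auto simp: fun_eq_iff bij_inv_l)
  moreover have "k1 \<circ> (V \<circ> k2 \<circ> inv V) \<in> K"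
    using K_normal[OF assms(1) k(3)] k(1) unfolding derived_def by (rule gen.gen_mult)
  ultimately show ?thesis unfolding rel_def by blast
qed

lemma rel_inv: assumes "u \<in> H" "v \<in> H" "rel u v" shows "rel (inv u) (inv v)"
proof -
  obtain k where k: "k \<in> K" "u = k \<circ> v" using assms(3) unfolding rel_def by blast
  have bv: "bij v" and bk: "bij k" using H_bij assms K_H k by auto
  have iv: "inv v \<in> H" using assms(2) by (rule gen.gen_inv)
  have ik: "inv k \<in> K" using k(1) unfolding derived_def by (rule gen.gen_inv)
  have e1: "inv u = inv v \<circ> inv k" using k bv bk by (simp add: o_inv_distrib)
  have "inv u = (inv v \<circ> inv k \<circ> inv (inv v)) \<circ> inv v"
    unfolding e1 using bv by (auto simp: fun_eq_iff inv_inv_eq bij_inv_r)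
  moreover have "inv v \<circ> inv k \<circ> inv (inv v) \<in> K" using K_normal[OF iv ik] .
  ultimately show ?thesis unfolding rel_def by blast
qed

lemma rel_comm: assumes "x \<in> H" "y \<in> H" shows "rel (x \<circ> y) (y \<circ> x)"
proof -
  have "x \<circ> y = (x \<circ> y \<circ> inv x \<circ> inv y) \<circ> (y \<circ> x)"
    using H_bij assms by (auto simp: fun_eq_iff bij_inv_l)
  then show ?thesis unfolding rel_def using comm_K[OF assms(2) assms(1)] by blast
qed

lemma rprod_H: "set xs \<subseteq> H \<Longrightarrow> rprod xs \<in> H"
  by (induction xs) (auto intro: gen.intros)

lemma rel_perm: "set xs \<subseteq> H \<Longrightarrow> mset xs = mset ys \<Longrightarrow> rel (rprod xs) (rprod ys)"
proof (induction xs arbitrary: ys)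
  case Nil then have "ys = []" by simp
  then show ?case by (simp only: rel_refl)
next
  case (Cons x xs)
  have "x \<in> set ys" using Cons.prems by (metis list.set_intros(1) set_mset_mset)
  then obtain ys1 ys2 where ys: "ys = ys1 @ x # ys2" by (meson split_list)
  have m: "mset xs = mset (ys1 @ ys2)" using Cons.prems ys by simp
  have sH: "set (ys1 @ ys2) \<subseteq> H" using Cons.prems m by (metis set_mset_mset insert_subset list.set(2))
  have xH: "x \<in> H" using Cons.prems by simp
  have xsH: "set xs \<subseteq> H" using Cons.prems by simp
  have 1: "rel (rprod xs \<circ> x) (rprod (ys1 @ ys2) \<circ> x)"
    by (rule rel_cong[OF rprod_H[OF sH] rel_refl Cons.IH[OF xsH m]])
  have y1H: "rprod ys1 \<in> H" and y2H: "rprod ys2 \<in> H" using sH by (auto intro: rprod_H)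
  have "rel (rprod ys2 \<circ> (rprod ys1 \<circ> x)) (rprod ys2 \<circ> (x \<circ> rprod ys1))"
    by (rule rel_cong[OF y2H rel_comm[OF y1H xH] rel_refl])
  then have 2: "rel (rprod (ys1 @ ys2) \<circ> x) (rprod ys)" unfolding ys rprod_append rprod_Cons' comp_assoc .
  show ?case unfolding rprod_Cons' using rel_trans[OF 1 2] .
qed

lemma rel_list: "list_all2 rel xs ys \<Longrightarrow> set ys \<subseteq> H \<Longrightarrow> rel (rprod xs) (rprod ys)"
proof (induction xs ys rule: list_all2_induct)
  case Nil then show ?case by (simp only: rel_refl)
next
  case (Cons x xs y ys)
  show ?case unfolding rprod_Cons' by (rule rel_cong) (use Cons in \<open>auto intro: rprod_H\<close>)
qed

lemma inv_rprod: "set xs \<subseteq> H \<Longrightarrow> inv (rprod xs) = rprod (rev (map inv xs))"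
proof (induction xs)
  case Nil then show ?case by simp
next
  case (Cons x xs)
  have "bij x" "bij (rprod xs)" using Cons.prems rprod_H H_bij by auto
  then have "inv (rprod xs \<circ> x) = inv x \<circ> inv (rprod xs)" by (simp add: o_inv_distrib)
  moreover have "inv (rprod xs) = rprod (rev (map inv xs))" using Cons by simp
  ultimately show ?case
    by (simp only: list.map rev.simps rprod_append rprod_Cons' rprod_Nil' id_comp)
qed

lemma rel_inv_rprod: assumes "set xs \<subseteq> H" shows "rel (rprod (map inv xs)) (inv (rprod xs))"
proof -
  have "set (map inv xs) \<subseteq> H" using assms by (auto intro: gen.gen_inv)
  moreover have "mset (map inv xs) = mset (rev (map inv xs))" by simp
  ultimately have "rel (rprod (map inv xs)) (rprod (rev (map inv xs)))" by (rule rel_perm)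
  then show ?thesis using inv_rprod[OF assms] by simp
qed

end

fun fl :: "(('a\<Rightarrow>'a) \<times> bool \<times> ('a list \<Rightarrow> 'a list)) \<Rightarrow> 'a \<Rightarrow> ('a \<Rightarrow> 'a)" where
  "fl (p, e, s) q = labe e s (p q)"

lemma cnt_bl: "cnt w = length (bl pp w)"
proof (induction w arbitrary: pp)
  case (Cons l w) then show ?case by (cases l) auto
qed simp

lemma cnt_secw_bl: "cnt (secw z w (pp y)) = length (filter (\<lambda>t. fst t y = z) (bl pp w))"
proof (induction w arbitrary: pp)
  case (Cons l w)
  show ?case
  proof (cases l)
    case (R a) then show ?thesis using Cons.IH[of "a \<circ> pp"] by (simp add: comp_def)
  qed (use Cons in auto)
qed simp

lemma length_filter_sum: "length (filter Pr xs) = sum_list (map (\<lambda>x. if Pr x then 1 else 0) xs)"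
  by (induction xs) auto

lemma sum_list_swap: fixes f :: "'a \<Rightarrow> 'b \<Rightarrow> nat" shows "sum_list (map (\<lambda>i. sum_list (map (f i) ys)) xs) = sum_list (map (\<lambda>t. sum_list (map (\<lambda>i. f i t) xs)) ys)"
proof (induction xs)
  case Nil then show ?case by (induction ys) auto
next
  case (Cons x xs)
  have "sum_list (map (\<lambda>t. sum_list (map (\<lambda>i. f i t) (x # xs))) ys)
     = sum_list (map (\<lambda>t. f x t + sum_list (map (\<lambda>i. f i t) xs)) ys)" by simp
  also have "\<dots> = sum_list (map (f x) ys) + sum_list (map (\<lambda>t. sum_list (map (\<lambda>i. f i t) xs)) ys)"
    by (rule sum_list_addf)
  finally show ?case using Cons by simp
qed

lemma sum_le1_eq: "(\<And>x. x \<in> set xs \<Longrightarrow> f x \<le> (1::nat)) \<Longrightarrow> sum_list (map f xs) \<le> length xs"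
proof (induction xs)
  case (Cons a xs)
  then have "f a \<le> 1" "sum_list (map f xs) \<le> length xs" by auto
  then show ?case by simp
qed simp

lemma sum_le1_all: "(\<And>x. x \<in> set xs \<Longrightarrow> f x \<le> (1::nat)) \<Longrightarrow> sum_list (map f xs) = length xs \<Longrightarrow> x \<in> set xs \<Longrightarrow> f x = 1"
proof (induction xs)
  case (Cons a xs)
  have "sum_list (map f xs) \<le> length xs" using Cons.prems(1) by (intro sum_le1_eq) auto
  moreover have "f a \<le> 1" using Cons.prems(1) by auto
  ultimately have "f a = 1" "sum_list (map f xs) = length xs" using Cons.prems(2) by auto
  then show ?case using Cons by auto
qed simp

lemma orbit_distinct:
  assumes ex: "\<exists>k>0. (a ^^ k) y = y" and ba: "bij a" and ij: "i < j" "j < per a y"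
  shows "(a ^^ i) y \<noteq> (a ^^ j) y"
proof
  assume eq: "(a ^^ i) y = (a ^^ j) y"
  have "(a ^^ j) y = (a ^^ i) ((a ^^ (j - i)) y)" using ij by (metis funpow_add le_add_diff_inverse less_imp_le o_apply)
  then have "(a ^^ (j - i)) y = y" using eq inj_fn[OF bij_is_inj[OF ba], of i] by (metis injD)
  then show False using per_min[OF ex, of "j - i"] ij by simp
qed

lemma card_le1: assumes "inj_on g T" "g ` T \<subseteq> {c}" "finite T" shows "card T \<le> 1"
proof -
  have "card T = card (g ` T)" using assms(1) by (simp add: card_image)
  also have "\<dots> \<le> card {c}" using assms(2) by (intro card_mono) auto
  finally show ?thesis by simp
qed

context csl begin

lemma pw_secw_bl: "valid A S w \<Longrightarrow> pw (secw z w (pp y)) = rprod (map (\<lambda>t. fl t y) (bl pp w))"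
proof (induction w arbitrary: pp)
  case Nil then show ?case by simp
next
  case (Cons l w)
  show ?case
  proof (cases l)
    case (R a) then show ?thesis using Cons.IH[of "a \<circ> pp"] Cons.prems by (simp add: comp_def)
  next
    case (P s)
    then have sB: "s \<in> B" using Cons.prems S_B by simp
    have e: "pw (if pp y = z then [P s] else [R (lab s (pp y))]) = lab s (pp y)"
      using lab_z[OF sB] by (auto simp: fun_eq_iff)
    show ?thesis using Cons P e by (simp add: labe_def)
  next
    case (N s)
    then have sB: "s \<in> B" using Cons.prems S_B by simp
    have e: "pw (if pp y = z then [N s] else [R (inv (lab s (pp y)))]) = inv (lab s (pp y))"
      using lab_z[OF sB] by (cases "pp y = z") simp_all
    show ?thesis using Cons N e by (simp add: labe_def)
  qed
qed

lemma bl_mem: "valid A S w \<Longrightarrow> pp \<in> A \<Longrightarrow> t \<in> set (bl pp w) \<Longrightarrow> fst t \<in> A \<and> snd (snd t) \<in> S"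
proof (induction w arbitrary: pp)
  case (Cons l w)
  show ?case
  proof (cases l)
    case (R a)
    then have ap: "a \<circ> pp \<in> A" using Cons.prems A_comp by auto
    then show ?thesis using Cons.IH[OF _ ap] Cons.prems R by (auto simp: comp_def)
  qed (use Cons in auto)
qed simp

end

context csl begin

lemma cnt_orbit:
  assumes v: "valid A S w" and ex: "\<exists>k>0. (pw w ^^ k) y = y"
  defines "a \<equiv> pw w" and "l \<equiv> per (pw w) y" and "Bl \<equiv> bl id w"
  shows "cnt (secw z (pwr w l) y) = sum_list (map (\<lambda>t. length (filter (\<lambda>i. fst t ((a ^^ i) y) = z) [0..<l])) Bl)"
    and "\<And>t. t \<in> set Bl \<Longrightarrow> length (filter (\<lambda>i. fst t ((a ^^ i) y) = z) [0..<l]) \<le> 1"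
proof -
  have c1: "cnt (secw z w q) = length (filter (\<lambda>t. fst t q = z) Bl)" for q
    using cnt_secw_bl[where w=w and pp=id and y=q and z=z] unfolding Bl_def by simp
  have "cnt (secw z (pwr w l) y) = sum_list (map (\<lambda>i. cnt (secw z w ((a ^^ i) y))) [0..<l])"
    unfolding secw_pwr cnt_concat a_def by (simp add: comp_def)
  also have "\<dots> = sum_list (map (\<lambda>i. sum_list (map (\<lambda>t. if fst t ((a ^^ i) y) = z then 1 else 0) Bl)) [0..<l])"
    unfolding c1 length_filter_sum ..
  also have "\<dots> = sum_list (map (\<lambda>t. sum_list (map (\<lambda>i. if fst t ((a ^^ i) y) = z then 1 else 0) [0..<l])) Bl)"
    by (rule sum_list_swap)
  also have "\<dots> = sum_list (map (\<lambda>t. length (filter (\<lambda>i. fst t ((a ^^ i) y) = z) [0..<l])) Bl)"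
    unfolding length_filter_sum ..
  finally show "cnt (secw z (pwr w l) y) = sum_list (map (\<lambda>t. length (filter (\<lambda>i. fst t ((a ^^ i) y) = z) [0..<l])) Bl)" .
next
  fix t assume t: "t \<in> set Bl"
  have pA: "fst t \<in> A" using bl_mem[OF v A_id] t unfolding Bl_def by blast
  have bp: "bij (fst t)" using A_bij[OF pA] .
  have ba: "bij a" using A_bij[OF pw_A[OF v]] a_def by simp
  define T where "T = set (filter (\<lambda>i. fst t ((a ^^ i) y) = z) [0..<l])"
  have "length (filter (\<lambda>i. fst t ((a ^^ i) y) = z) [0..<l]) = card T"
    unfolding T_def by (rule distinct_card[symmetric]) simp
  also have "card T \<le> 1"
  proof (rule card_le1)
    show "inj_on (\<lambda>i. fst t ((a ^^ i) y)) T"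
    proof (rule inj_onI)
      fix i j assume ij: "i \<in> T" "j \<in> T" "fst t ((a ^^ i) y) = fst t ((a ^^ j) y)"
      then have e: "(a ^^ i) y = (a ^^ j) y" using bp by (metis bij_is_inj injD)
      have il: "i < l" "j < l" using ij unfolding T_def by auto
      show "i = j"
      proof (rule ccontr)
        assume "i \<noteq> j"
        then have "i < j \<or> j < i" by auto
        moreover have ex': "\<exists>k>0. (a ^^ k) y = y" using ex unfolding a_def .
        moreover have ll: "l = per a y" unfolding l_def a_def ..
        ultimately show False using orbit_distinct[OF ex' ba, of i j] orbit_distinct[OF ex' ba, of j i] il e
          by auto
      qed
    qed
    show "(\<lambda>i. fst t ((a ^^ i) y)) ` T \<subseteq> {z}" unfolding T_def by auto
    show "finite T" unfolding T_def by simp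
  qed
  finally show "length (filter (\<lambda>i. fst t ((a ^^ i) y) = z) [0..<l]) \<le> 1" .
qed

lemma cnt_W_le:
  assumes v: "valid A S w" and ex: "\<exists>k>0. (pw w ^^ k) y = y"
  shows "cnt (secw z (pwr w (per (pw w) y)) y) \<le> cnt w"
proof -
  have "sum_list (map (\<lambda>t. length (filter (\<lambda>i. fst t ((pw w ^^ i) y) = z) [0..<per (pw w) y])) (bl id w))
      \<le> length (bl id w)"
    by (rule sum_le1_eq) (rule cnt_orbit(2)[OF v ex])
  then show ?thesis using cnt_orbit(1)[OF v ex] cnt_bl[of w id] by simp
qed

lemma cnt_W_eq:
  assumes v: "valid A S w" and ex: "\<exists>k>0. (pw w ^^ k) y = y"
    and eq: "cnt (secw z (pwr w (per (pw w) y)) y) = cnt w" and t: "t \<in> set (bl id w)"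
  shows "\<exists>m < per (pw w) y. fst t ((pw w ^^ m) y) = z"
proof -
  have "sum_list (map (\<lambda>t. length (filter (\<lambda>i. fst t ((pw w ^^ i) y) = z) [0..<per (pw w) y])) (bl id w))
      = length (bl id w)"
    using cnt_orbit(1)[OF v ex] cnt_bl[of w id] eq by simp
  moreover have bnd: "\<And>t'. t' \<in> set (bl id w) \<Longrightarrow> length (filter (\<lambda>i. fst t' ((pw w ^^ i) y) = z) [0..<per (pw w) y]) \<le> 1"
    by (rule cnt_orbit(2)[OF v ex])
  ultimately have "length (filter (\<lambda>i. fst t ((pw w ^^ i) y) = z) [0..<per (pw w) y]) = 1"
    using sum_le1_all[where f="\<lambda>t. length (filter (\<lambda>i. fst t ((pw w ^^ i) y) = z) [0..<per (pw w) y])", OF bnd] t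
    by blast
  then have "filter (\<lambda>i. fst t ((pw w ^^ i) y) = z) [0..<per (pw w) y] \<noteq> []" by auto
  then obtain m where "m \<in> set (filter (\<lambda>i. fst t ((pw w ^^ i) y) = z) [0..<per (pw w) y])"
    by (meson ex_in_conv set_empty)
  then show ?thesis by auto
qed

end

lemma conj_pow: assumes "bij p" shows "(p \<circ> a \<circ> inv p) ^^ i = p \<circ> a ^^ i \<circ> inv p"
proof (induction i)
  case 0 then show ?case using assms by (auto simp: fun_eq_iff bij_is_surj surj_f_inv_f)
next
  case (Suc i)
  have "(p \<circ> a \<circ> inv p) ^^ Suc i = (p \<circ> a \<circ> inv p) \<circ> (p \<circ> a ^^ i \<circ> inv p)"
    using Suc by (simp only: funpow.simps)
  also have "\<dots> = p \<circ> a ^^ Suc i \<circ> inv p" using assms by (auto simp: fun_eq_iff bij_is_inj)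
  finally show ?case .
qed

lemma funpow_comm_apply: "(a ^^ i) ((a ^^ m) y) = (a ^^ m) ((a ^^ i) y)"
proof -
  have "(a ^^ i) ((a ^^ m) y) = (a ^^ (i + m)) y" by (simp add: funpow_add)
  also have "\<dots> = (a ^^ (m + i)) y" by (simp add: add.commute)
  also have "\<dots> = (a ^^ m) ((a ^^ i) y)" by (simp add: funpow_add)
  finally show ?thesis .
qed

lemma orbit_L:
  assumes ex: "\<exists>k>0. (a ^^ k) y = y" and ba: "bij a" and bp: "bij p"
    and m: "m < per a y" and hit: "p ((a ^^ m) y) = z"
  defines "d \<equiv> p \<circ> a \<circ> inv p" and "l \<equiv> per a y"
  shows "distinct (map (\<lambda>i. p ((a ^^ i) y)) [0..<l])"
    and "distinct (map (\<lambda>i. (d ^^ i) z) [0..<l])"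
    and "set (map (\<lambda>i. p ((a ^^ i) y)) [0..<l]) = set (map (\<lambda>i. (d ^^ i) z) [0..<l])"
    and "orb d z = set (map (\<lambda>i. (d ^^ i) z) [0..<l])"
    and "orb_len d z = l"
proof -
  define Orb where "Orb = {(a ^^ n) y | n. True}"
  have dist: "i < l \<Longrightarrow> j < l \<Longrightarrow> (a ^^ i) y = (a ^^ j) y \<Longrightarrow> i = j" for i j
  proof (rule ccontr)
    assume a: "i < l" "j < l" "(a ^^ i) y = (a ^^ j) y" "i \<noteq> j"
    then consider "i < j" | "j < i" by linarith
    then show False
    proof cases
      case 1 then show False using orbit_distinct[OF ex ba, of i j] a unfolding l_def by simp
    next
      case 2 then show False using orbit_distinct[OF ex ba, of j i] a unfolding l_def by simp
    qed
  qed
  have injp: "inj p" using bp bij_is_inj by blast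
  have pf: "(a ^^ per a y) y = y" using per_fix[OF ex] .
  have lpos: "0 < l" using per_pos[OF ex] l_def by simp
  have Orb1: "Orb = (\<lambda>i. (a ^^ i) y) ` {0..<l}"
  proof
    show "Orb \<subseteq> (\<lambda>i. (a ^^ i) y) ` {0..<l}"
    proof
      fix x assume "x \<in> Orb"
      then obtain n where "x = (a ^^ n) y" unfolding Orb_def by blast
      then have "x = (a ^^ (n mod l)) y" using funpow_mod[OF pf] l_def by simp
      moreover have "n mod l < l" using lpos by simp
      ultimately show "x \<in> (\<lambda>i. (a ^^ i) y) ` {0..<l}" by auto
    qed
    show "(\<lambda>i. (a ^^ i) y) ` {0..<l} \<subseteq> Orb" unfolding Orb_def by auto
  qed
  show d1: "distinct (map (\<lambda>i. p ((a ^^ i) y)) [0..<l])"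
    unfolding distinct_map
  proof
    show "inj_on (\<lambda>i. p ((a ^^ i) y)) (set [0..<l])"
    proof (rule inj_onI)
      fix i j assume ij: "i \<in> set [0..<l]" "j \<in> set [0..<l]" "p ((a ^^ i) y) = p ((a ^^ j) y)"
      then have "(a ^^ i) y = (a ^^ j) y" using injD[OF injp] by blast
      then show "i = j" using dist ij by auto
    qed
  qed simp
  have s1: "set (map (\<lambda>i. p ((a ^^ i) y)) [0..<l]) = p ` Orb" unfolding Orb1 by auto
  have ipz: "inv p z = (a ^^ m) y" using inv_f_f[OF injp, of "(a ^^ m) y"] hit by simp
  have dz: "(d ^^ i) z = p ((a ^^ m) ((a ^^ i) y))" for i
  proof -
    have "(d ^^ i) z = p ((a ^^ i) (inv p z))" unfolding d_def conj_pow[OF bp] by simp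
    then show ?thesis using ipz funpow_comm_apply[where a=a and i=i and m=m and y=y] by simp
  qed
  show d2: "distinct (map (\<lambda>i. (d ^^ i) z) [0..<l])"
    unfolding distinct_map
  proof
    show "inj_on (\<lambda>i. (d ^^ i) z) (set [0..<l])"
    proof (rule inj_onI)
      fix i j assume ij: "i \<in> set [0..<l]" "j \<in> set [0..<l]" "(d ^^ i) z = (d ^^ j) z"
      have "(a ^^ m) ((a ^^ i) y) = (a ^^ m) ((a ^^ j) y)"
        by (rule injD[OF injp]) (use ij(3) in \<open>simp add: dz\<close>)
      then have "(a ^^ i) y = (a ^^ j) y" by (rule injD[OF inj_fn[OF bij_is_inj[OF ba]]])
      then show "i = j" using dist ij by auto
    qed
  qed simp
  have s2sub: "(d ^^ n) z \<in> p ` Orb" for n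
  proof -
    have "(a ^^ m) ((a ^^ n) y) = (a ^^ (m + n)) y" by (simp add: funpow_add)
    then show ?thesis unfolding dz Orb_def by auto
  qed
  have fin: "finite (p ` Orb)" using s1[symmetric] by simp
  have c1: "card (p ` Orb) = l" using distinct_card[OF d1] s1 by simp
  have c2: "card (set (map (\<lambda>i. (d ^^ i) z) [0..<l])) = l" using distinct_card[OF d2] by simp
  have s2: "set (map (\<lambda>i. (d ^^ i) z) [0..<l]) = p ` Orb"
    by (rule card_subset_eq[OF fin]) (use s2sub c1 c2 in auto)
  show "set (map (\<lambda>i. p ((a ^^ i) y)) [0..<l]) = set (map (\<lambda>i. (d ^^ i) z) [0..<l])" using s1 s2 by simp
  have o: "orb d z = set (map (\<lambda>i. (d ^^ i) z) [0..<l])"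
  proof
    show "orb d z \<subseteq> set (map (\<lambda>i. (d ^^ i) z) [0..<l])" unfolding orb_def s2 using s2sub by auto
    show "set (map (\<lambda>i. (d ^^ i) z) [0..<l]) \<subseteq> orb d z" unfolding orb_def by auto
  qed
  then show "orb d z = set (map (\<lambda>i. (d ^^ i) z) [0..<l])" .
  show "orb_len d z = l" unfolding orb_len_def o using c2 .
qed

lemma mset_concat_cons: "mset (concat (map (\<lambda>t. g t # h t) ys)) = mset (map g ys) + mset (concat (map h ys))"
  by (induction ys) (auto simp: add_ac)

lemma mset_swap: "mset (concat (map (\<lambda>i. map (\<lambda>t. f i t) ys) xs)) = mset (concat (map (\<lambda>t. map (\<lambda>i. f i t) xs) ys))"
proof (induction xs)
  case Nil then show ?case by (induction ys) auto
next
  case (Cons x xs)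
  have "mset (concat (map (\<lambda>t. map (\<lambda>i. f i t) (x # xs)) ys)) = mset (map (f x) ys) + mset (concat (map (\<lambda>t. map (\<lambda>i. f i t) xs) ys))"
    using mset_concat_cons[of "\<lambda>t. f x t" "\<lambda>t. map (\<lambda>i. f i t) xs" ys] by simp
  then show ?case using Cons by simp
qed

lemma la2: "(\<And>x. x \<in> set xs \<Longrightarrow> Rl (f x) (g x)) \<Longrightarrow> list_all2 Rl (map f xs) (map g xs)"
  by (induction xs) auto

context csl begin

lemma CC_mem:
  assumes aA: "a \<in> A" and pA: "p \<in> A" and ex: "\<exists>k>0. (a ^^ k) y = y"
    and m: "m < per a y" and hit: "p ((a ^^ m) y) = z"
  shows "p \<circ> a \<circ> inv p \<in> CC z A a y"
proof -
  define r where "r = per a y - m"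
  define c where "c = a ^^ r \<circ> inv p"
  have ba: "bij a" and bp: "bij p" using A_bij aA pA by auto
  have bar: "bij (a ^^ r)" using A_bij[OF A_pow[OF aA]] .
  have cA: "c \<in> A" unfolding c_def by (rule A_comp[OF A_inv[OF pA] A_pow[OF aA]])
  have ipz: "inv p z = (a ^^ m) y" using inv_f_f[OF bij_is_inj[OF bp], of "(a ^^ m) y"] hit by simp
  have "c z = (a ^^ (r + m)) y" unfolding c_def using ipz by (simp add: funpow_add)
  also have "r + m = per a y" using m r_def by simp
  finally have cz: "c z = y" using per_fix[OF ex] by simp
  have ic: "inv c = p \<circ> inv (a ^^ r)" unfolding c_def using bar bp
    by (simp add: o_inv_distrib bij_imp_bij_inv inv_inv_eq)
  have "inv c \<circ> a \<circ> c = p \<circ> a \<circ> inv p"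
  proof (rule ext)
    fix x
    have "a ((a ^^ r) (inv p x)) = (a ^^ r) (a (inv p x))" by (rule funpow_swap1)
    then show "(inv c \<circ> a \<circ> c) x = (p \<circ> a \<circ> inv p) x"
      unfolding comp_apply ic using inv_f_f[OF bij_is_inj[OF bar]] by (simp add: c_def)
  qed
  then have e: "p \<circ> a \<circ> inv p = inv c \<circ> a \<circ> c" by simp
  have "c \<in> mp z A y" unfolding mp_def using cA cz by simp
  then show ?thesis unfolding CC_def e by blast
qed

end

lemma rprod_gen: "set xs \<subseteq> gen T \<Longrightarrow> rprod xs \<in> gen T"
  by (induction xs) (auto intro: gen.intros)

context csl begin

lemma SIG:
  assumes v: "valid A S w" and ex: "\<exists>k>0. (pw w ^^ k) y = y"
    and eq: "cnt (secw z (pwr w (per (pw w) y)) y) = cnt w"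
  shows "pw (secw z (pwr w (per (pw w) y)) y) \<in> sigma z A S (pw w) y"
proof -
  define a where "a = pw w"
  define l where "l = per a y"
  define Bl where "Bl = bl id w"
  define X where "X = {lab b y' | b y'. y' \<in> XX z A a y \<and> b \<in> S}"
  define GG where "GG = {rprod (map (\<lambda>i. lab b ((c ^^ i) z)) [1..<orb_len c z]) | c b. c \<in> CC z A a y \<and> b \<in> S}"
  have aA: "a \<in> A" using pw_A[OF v] a_def by simp
  have ba: "bij a" using A_bij[OF aA] .
  have ex': "\<exists>k>0. (a ^^ k) y = y" using ex a_def by simp
  have lpos: "0 < l" using per_pos[OF ex'] l_def by simp
  have Xbij: "bij x" if xX: "x \<in> X" for x
  proof -
    obtain b y' where x: "x = lab b y'" "y' \<in> XX z A a y" "b \<in> S" using xX unfolding X_def by blast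
    have "y' \<noteq> z" using x(2) unfolding XX_def by blast
    then show ?thesis using lab_nz[OF S_B[OF x(3)]] A_bij x(1) by simp
  qed
  interpret D: dsg X by unfold_locales (rule Xbij)
  have sig: "sigma z A S a y = setmul (gen GG) (derived (gen X))"
    unfolding sigma_def HS_def GG_def X_def ..
  define Gf where "Gf p s = rprod (map (\<lambda>i. lab s (((p \<circ> a \<circ> inv p) ^^ i) z)) [1..<orb_len (p \<circ> a \<circ> inv p) z])" for p s
  define Q where "Q t = (if fst (snd t) then Gf (fst t) (snd (snd t)) else inv (Gf (fst t) (snd (snd t))))" for t
  define block where "block t = rprod (map (\<lambda>i. fl t ((a ^^ i) y)) [0..<l])" for t
  have blk: "D.rel (block t) (Q t) \<and> Q t \<in> gen X \<and> Q t \<in> gen GG \<and> (\<forall>i<l. fl t ((a ^^ i) y) \<in> gen X)"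
    if t: "t \<in> set Bl" for t
  proof -
    obtain p e s where tt: "t = (p, e, s)" by (cases t)
    have pA: "p \<in> A" and sS: "s \<in> S" using bl_mem[OF v A_id] t tt unfolding Bl_def by force+
    have sB: "s \<in> B" using S_B[OF sS] .
    have bp: "bij p" using A_bij[OF pA] .
    obtain m where m: "m < l" and hit: "p ((a ^^ m) y) = z"
      using cnt_W_eq[OF v ex eq, of t] t tt unfolding Bl_def l_def a_def by auto
    define d where "d = p \<circ> a \<circ> inv p"
    have m': "m < per a y" using m l_def by simp
    have dCC: "d \<in> CC z A a y" unfolding d_def by (rule CC_mem[OF aA pA ex' m' hit])
    note OL = orbit_L[OF ex' ba bp m' hit, folded d_def l_def]
    have labH: "lab s q \<in> gen X" if q: "q \<in> orb d z" for q
    proof (cases "q = z")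
      case True then show ?thesis using lab_z[OF sB] by (simp add: gen.gen_id)
    next
      case False
      then have "q \<in> XX z A a y" using q dCC unfolding XX_def by blast
      then show ?thesis unfolding X_def using sS by (blast intro: gen.gen_base)
    qed
    have L1orb: "p ((a ^^ i) y) \<in> orb d z" if "i < l" for i
      using that OL(3) OL(4) by auto
    have L2orb: "(d ^^ i) z \<in> orb d z" for i unfolding orb_def by auto
    have elemH: "\<forall>i<l. fl t ((a ^^ i) y) \<in> gen X"
      using labH L1orb by (auto simp: tt labe_def intro: gen.gen_inv)
    have G_eq: "Gf p s = rprod (map (\<lambda>i. lab s ((d ^^ i) z)) [1..<l])"
      unfolding Gf_def d_def[symmetric] OL(5) ..
    have GH: "Gf p s \<in> gen X" unfolding G_eq by (rule D.rprod_H) (use labH L2orb in auto)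
    have GGG: "Gf p s \<in> gen GG" unfolding Gf_def GG_def using dCC sS d_def by (blast intro: gen.gen_base)
    define F1 where "F1 = map (\<lambda>i. lab s (p ((a ^^ i) y))) [0..<l]"
    have F1H: "set F1 \<subseteq> gen X" unfolding F1_def using labH L1orb by auto
    have msetL: "mset (map (\<lambda>i. p ((a ^^ i) y)) [0..<l]) = mset (map (\<lambda>i. (d ^^ i) z) [0..<l])"
      using OL(1) OL(2) OL(3) set_eq_iff_mset_eq_distinct by blast
    have F1e: "F1 = map (lab s) (map (\<lambda>i. p ((a ^^ i) y)) [0..<l])" unfolding F1_def by simp
    have "mset F1 = mset (map (lab s) (map (\<lambda>i. (d ^^ i) z) [0..<l]))"
      unfolding F1e using arg_cong[OF msetL, of "image_mset (lab s)"] by (simp only: mset_map)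
    moreover have "rprod (map (lab s) (map (\<lambda>i. (d ^^ i) z) [0..<l])) = Gf p s"
    proof -
      have "[0..<l] = 0 # [1..<l]" using lpos by (simp add: upt_conv_Cons)
      then show ?thesis unfolding G_eq using lab_z[OF sB] by (simp add: comp_def)
    qed
    ultimately have relF1: "D.rel (rprod F1) (Gf p s)" using D.rel_perm[OF F1H] by metis
    have "D.rel (block t) (Q t)"
    proof (cases e)
      case True
      have "block t = rprod F1" unfolding block_def F1_def tt using True by (simp add: labe_def comp_def)
      then show ?thesis using relF1 True by (simp add: Q_def tt)
    next
      case False
      have "block t = rprod (map inv F1)" unfolding block_def F1_def tt using False by (simp add: labe_def comp_def)
      moreover have "D.rel (rprod (map inv F1)) (inv (rprod F1))" by (rule D.rel_inv_rprod[OF F1H])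
      moreover have "D.rel (inv (rprod F1)) (inv (Gf p s))" by (rule D.rel_inv[OF D.rprod_H[OF F1H] GH relF1])
      ultimately show ?thesis using False D.rel_trans by (simp add: Q_def tt)
    qed
    moreover have "Q t \<in> gen X" using GH by (simp add: Q_def tt gen.gen_inv)
    moreover have "Q t \<in> gen GG" using GGG by (simp add: Q_def tt gen.gen_inv)
    ultimately show ?thesis using elemH by blast
  qed
  define W where "W = secw z (pwr w l) y"
  have "pw W = rprod (map (\<lambda>i. rprod (map (\<lambda>t. fl t ((a ^^ i) y)) Bl)) [0..<l])"
  proof -
    have "pw (secw z w ((a ^^ i) y)) = rprod (map (\<lambda>t. fl t ((a ^^ i) y)) Bl)" for i
      using pw_secw_bl[OF v, where pp=id and y="(a ^^ i) y"] unfolding Bl_def by simp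
    then show ?thesis unfolding W_def secw_pwr pw_concat a_def[symmetric] by (simp add: comp_def)
  qed
  also have "\<dots> = rprod (concat (map (\<lambda>i. map (\<lambda>t. fl t ((a ^^ i) y)) Bl) [0..<l]))"
    by (simp add: rprod_concat comp_def)
  finally have pwW: "pw W = rprod (concat (map (\<lambda>i. map (\<lambda>t. fl t ((a ^^ i) y)) Bl) [0..<l]))" .
  have allH: "set (concat (map (\<lambda>i. map (\<lambda>t. fl t ((a ^^ i) y)) Bl) [0..<l])) \<subseteq> gen X"
    using blk by auto
  have r1: "D.rel (pw W) (rprod (concat (map (\<lambda>t. map (\<lambda>i. fl t ((a ^^ i) y)) [0..<l]) Bl)))"
    unfolding pwW by (rule D.rel_perm[OF allH mset_swap])
  have e2: "rprod (concat (map (\<lambda>t. map (\<lambda>i. fl t ((a ^^ i) y)) [0..<l]) Bl)) = rprod (map block Bl)"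
    unfolding block_def by (simp add: rprod_concat comp_def)
  have r2: "D.rel (rprod (map block Bl)) (rprod (map Q Bl))"
    by (rule D.rel_list) (use blk in \<open>auto intro: la2\<close>)
  have r: "D.rel (pw W) (rprod (map Q Bl))" using D.rel_trans[OF r1[unfolded e2] r2] .
  have qG: "rprod (map Q Bl) \<in> gen GG" by (rule rprod_gen) (use blk in auto)
  obtain k where k: "k \<in> derived (gen X)" "pw W = k \<circ> rprod (map Q Bl)" using r unfolding D.rel_def by blast
  have "pw W \<in> setmul (gen GG) (derived (gen X))" unfolding setmul_def using k qG by blast
  then show ?thesis unfolding W_def l_def a_def sig[unfolded a_def] .
qed

end

lemma per_id: "per id y = 1"
  unfolding per_def by (rule Least_equality) (auto simp: funpow_id_pow)

context csl begin

lemma pn_secw_full: "cnt (secw z w y) = cnt w \<Longrightarrow> pn (secw z w y)"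
proof (induction w arbitrary: y)
  case Nil then show ?case by (simp add: pn_def)
next
  case (Cons l w)
  show ?case
  proof (cases l)
    case (R a) then show ?thesis using Cons by simp
  next
    case (P s)
    have le: "cnt (secw z w y) \<le> cnt w" by (rule cnt_secw_le)
    have "y = z" "cnt (secw z w y) = cnt w" using Cons.prems P le by (auto split: if_splits)
    then show ?thesis using Cons.IH P by (simp add: pn_def)
  next
    case (N s)
    have le: "cnt (secw z w y) \<le> cnt w" by (rule cnt_secw_le)
    have "y = z" "cnt (secw z w y) = cnt w" using Cons.prems N le by (auto split: if_splits)
    then show ?thesis using Cons.IH N by (simp add: pn_def)
  qed
qed

lemma pn_B: "valid A S w \<Longrightarrow> pn w \<Longrightarrow> evw w \<in> B"
proof (induction w)
  case Nil show ?case unfolding evw.simps(1) BS by (rule gen.gen_id)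
next
  case (Cons l w)
  have vw: "valid A S w" using Cons.prems(1) by (simp add: valid_def)
  have pw': "pn w" using Cons.prems(2) by (simp add: pn_def)
  have IH: "evw w \<in> gen S" using Cons.IH[OF vw pw'] BS by simp
  show ?case
  proof (cases l)
    case (R a) then show ?thesis using Cons.prems by (simp add: pn_def)
  next
    case (P s)
    then have "s \<in> gen S" using Cons.prems by (simp add: gen.gen_base)
    then have "evw w \<circ> s \<in> gen S" using IH by (rule gen.gen_mult)
    then show ?thesis using P BS by (simp add: comp_def)
  next
    case (N s)
    then have "inv s \<in> gen S" using Cons.prems by (simp add: gen.gen_base gen.gen_inv)
    then have "evw w \<circ> inv s \<in> gen S" using IH by (rule gen.gen_mult)
    then show ?thesis using N BS by (simp add: comp_def)
  qed
qed

lemma Sigma_mono: "U \<subseteq> V \<Longrightarrow> Sigma_map z A S U \<subseteq> Sigma_map z A S V"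
  unfolding Sigma_map_def by blast

lemma Sigma_pow_mono: "U \<subseteq> V \<Longrightarrow> (Sigma_map z A S ^^ m) U \<subseteq> (Sigma_map z A S ^^ m) V"
proof (induction m)
  case 0 then show ?case by simp
next
  case (Suc m)
  then have "Sigma_map z A S ((Sigma_map z A S ^^ m) U) \<subseteq> Sigma_map z A S ((Sigma_map z A S ^^ m) V)"
    by (intro Sigma_mono) simp
  then show ?case by simp
qed

context
  assumes PA: "periodic A" and FF: "finite_exponent A \<or> finite_support z B"
begin

lemma ex_per: "valid A S w \<Longrightarrow> \<exists>k>0. (pw w ^^ k) y = y"
  using A_per[OF PA pw_A] by fastforce

lemma S1:
  assumes IH: "\<And>W. valid A S W \<Longrightarrow> cnt W < n \<Longrightarrow> finord (evw W)"
    and v: "valid A S w" and c: "cnt w = n" and p: "pw w = id"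
  shows "finord (evw w)"
proof (rule CMB[OF PA FF v])
  fix y
  have e: "secw z (pwr w (per (pw w) y)) y = secw z w y" unfolding p per_id by (simp add: pwr_def)
  have vs: "valid A S (secw z w y)" by (rule valid_secw[OF v])
  show "finord (evw (secw z (pwr w (per (pw w) y)) y))"
    unfolding e
  proof (cases "cnt (secw z w y) < n")
    case True then show "finord (evw (secw z w y))" using IH vs by blast
  next
    case False
    then have "cnt (secw z w y) = cnt w" using cnt_secw_le[where w=w and y=y and z=z] c by simp
    then have "pn (secw z w y)" by (rule pn_secw_full)
    then have "evw (secw z w y) \<in> B" using pn_B vs by blast
    then show "finord (evw (secw z w y))" using B_finord[OF PA FF] by blast
  qed
qed

lemma S2:
  assumes IH: "\<And>W. valid A S W \<Longrightarrow> cnt W < n \<Longrightarrow> finord (evw W)"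
  shows "valid A S w \<Longrightarrow> cnt w = n \<Longrightarrow> (\<forall>m>k. (Sigma_map z A S ^^ m) {pw w} \<subseteq> {id}) \<Longrightarrow> finord (evw w)"
proof (induction k arbitrary: w)
  case (0 w)
  show ?case
  proof (rule CMB[OF PA FF 0(1)])
    fix y
    define W where "W = secw z (pwr w (per (pw w) y)) y"
    have vW: "valid A S W" unfolding W_def by (rule valid_secw[OF valid_pwr[OF 0(1)]])
    have ex: "\<exists>k>0. (pw w ^^ k) y = y" by (rule ex_per[OF 0(1)])
    have le: "cnt W \<le> n" using cnt_W_le[OF 0(1) ex] 0(2) W_def by simp
    show "finord (evw W)"
    proof (cases "cnt W < n")
      case True then show ?thesis using IH vW by blast
    next
      case False
      then have eq: "cnt W = cnt w" using le 0(2) by simp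
      have "pw W \<in> sigma z A S (pw w) y" using SIG[OF 0(1) ex] eq W_def by simp
      then have "pw W \<in> Sigma_map z A S {pw w}" unfolding Sigma_map_def by blast
      then have "pw W = id" using 0(3)[rule_format, of 1] by auto
      then show ?thesis using S1[OF IH vW] eq 0(2) by simp
    qed
  qed
next
  case (Suc k w)
  show ?case
  proof (rule CMB[OF PA FF Suc(2)])
    fix y
    define W where "W = secw z (pwr w (per (pw w) y)) y"
    have vW: "valid A S W" unfolding W_def by (rule valid_secw[OF valid_pwr[OF Suc(2)]])
    have ex: "\<exists>k>0. (pw w ^^ k) y = y" by (rule ex_per[OF Suc(2)])
    have le: "cnt W \<le> n" using cnt_W_le[OF Suc(2) ex] Suc(3) W_def by simp
    show "finord (evw W)"
    proof (cases "cnt W < n")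
      case True then show ?thesis using IH vW by blast
    next
      case False
      then have eq: "cnt W = cnt w" using le Suc(3) by simp
      have "pw W \<in> sigma z A S (pw w) y" using SIG[OF Suc(2) ex] eq W_def by simp
      then have mem: "{pw W} \<subseteq> Sigma_map z A S {pw w}" unfolding Sigma_map_def by blast
      have "\<forall>m>k. (Sigma_map z A S ^^ m) {pw W} \<subseteq> {id}"
      proof (intro allI impI)
        fix m assume "m > k"
        have "(Sigma_map z A S ^^ m) {pw W} \<subseteq> (Sigma_map z A S ^^ m) (Sigma_map z A S {pw w})"
          by (rule Sigma_pow_mono[OF mem])
        also have "\<dots> = (Sigma_map z A S ^^ Suc m) {pw w}" by (simp add: funpow_Suc_right del: funpow.simps)
        also have "\<dots> \<subseteq> {id}" by (rule Suc(4)[rule_format]) (use \<open>m > k\<close> in simp)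
        finally show "(Sigma_map z A S ^^ m) {pw W} \<subseteq> {id}" .
      qed
      then show ?thesis using Suc.IH[OF vW] eq Suc(3) unfolding id_def by simp
    qed
  qed
qed

lemma main: assumes ET: "eventually_trivial z A S" shows "valid A S w \<Longrightarrow> finord (evw w)"
proof (induction "cnt w" arbitrary: w rule: less_induct)
  case less
  have IH: "\<And>W. valid A S W \<Longrightarrow> cnt W < cnt w \<Longrightarrow> finord (evw W)" using less by blast
  obtain k where "\<forall>m>k. (Sigma_map z A S ^^ m) {pw w} \<subseteq> {id}"
    using ET pw_A[OF less.prems] unfolding eventually_trivial_def by blast
  then show ?case using S2[OF IH less.prems refl] by blast
qed

end
end

theorem theoremB:
  fixes z :: 'x and A :: "('x \<Rightarrow> 'x) set" and B S :: "('x list \<Rightarrow> 'x list) set"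
  assumes "CS_group z A B"
    and "periodic A"
    and "finite_exponent A \<or> finite_support z B"
    and "S \<subseteq> B" and "B = gen S"
    and "eventually_trivial z A S"
  shows "periodic (CS_gen A B)"
proof -
  interpret csl z A B S using assms(1,4,5) by unfold_locales
  show ?thesis unfolding periodic_def
  proof
    fix g assume "g \<in> CS_gen A B"
    then obtain w where "valid A S w" "g = evw w" using G_words by blast
    then show "\<exists>n>0. g ^^ n = id" using main[OF assms(2) assms(3) assms(6)] unfolding finord_def by blast
  qed
qed

end
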